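(* Let $V$ be a real vector space of finite even dimension with nondegenerate quadratic form $Q$, and let $\sigma$ be a real structure on $\mathbb{C}l(V)$. The following are equivalent: (1) $\sigma$ is admissible; (2) $V_\sigma$ is stable under $c$; (3) $V$ is stable under $\sigma$; (4) $\sigma$ restricts to a $Q$-orthogonal symmetry of $V$ (an involutive $Q$-orthogonal transformation of $V$); (5) the subspaces $V_+:=V\cap V_\sigma$ and $V_-:=V\cap iV_\sigma$ form a $Q$-orthogonal decomposition $V=V_+\oplus V_-$.
   Context: $Cl(V,Q)$ is the real Clifford algebra with $v^2=+Q(v)$, $\mathbb{C}l(V)=Cl(V,Q)\otimes\mathbb{C}$ with complex conjugation $c(a\otimes\lambda)=a\otimes\bar\lambda$, and $V^{\mathbb{C}}=V\otimes\mathbb{C}\subset\mathbb{C}l(V)$. A real structure is an involutive antilinear algebra automorphism of $\mathbb{C}l(V)$ stabilizing $V^{\mathbb{C}}$; it is admissible if it commutes with $c$. $V_\sigma=\{v\in V^{\mathbb{C}}:\sigma(v)=v\}$. *)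

theory Defs
  imports "HOL-Analysis.Analysis"
begin

definition quadratic_form :: "('v::real_vector \<Rightarrow> real) \<Rightarrow> bool" where
  "quadratic_form Q \<longleftrightarrow>
     (\<exists>B. bilinear B \<and> (\<forall>u w. B u w = B w u) \<and> (\<forall>v. Q v = B v v))"

text \<open>Nondegenerate: the radical of the polar form is trivial.\<close>
definition nondegenerate :: "('v::real_vector \<Rightarrow> real) \<Rightarrow> bool" where
  "nondegenerate Q \<longleftrightarrow> (\<forall>u. (\<forall>w. Q (u + w) = Q u + Q w) \<longrightarrow> u = 0)"

text \<open>A real algebra A with a map iota from V is (a model of) the real Clifford algebra
  Cl(V,Q) with convention v^2 = +Q(v): iota is linear, satisfies the Clifford relation,
  its image generates A as a real algebra, and dim A = 2^(dim V).
  (These properties characterize Cl(V,Q) up to isomorphism.)\<close>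
definition is_clifford_algebra ::
  "('v::euclidean_space \<Rightarrow> real) \<Rightarrow> ('v \<Rightarrow> 'a::real_algebra_1) \<Rightarrow> bool" where
  "is_clifford_algebra Q \<iota> \<longleftrightarrow>
     linear \<iota> \<and>
     (\<forall>v. \<iota> v * \<iota> v = of_real (Q v)) \<and>
     span {prod_list (map \<iota> vs) | vs. True} = (UNIV :: 'a set) \<and>
     dim (UNIV :: 'a set) = 2 ^ DIM('v)"

text \<open>Complexification Cl(V,Q) \<otimes> C, realised as pairs (a,b) = a \<otimes> 1 + b \<otimes> i.\<close>

definition cx_add :: "'a::real_algebra_1 \<times> 'a \<Rightarrow> 'a \<times> 'a \<Rightarrow> 'a \<times> 'a" where
  "cx_add x y = (fst x + fst y, snd x + snd y)"

definition cx_mult :: "'a::real_algebra_1 \<times> 'a \<Rightarrow> 'a \<times> 'a \<Rightarrow> 'a \<times> 'a" where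
  "cx_mult x y = (fst x * fst y - snd x * snd y, fst x * snd y + snd x * fst y)"

definition cx_scale :: "complex \<Rightarrow> 'a::real_algebra_1 \<times> 'a \<Rightarrow> 'a \<times> 'a" where
  "cx_scale z x = (Re z *\<^sub>R fst x - Im z *\<^sub>R snd x, Re z *\<^sub>R snd x + Im z *\<^sub>R fst x)"

definition cx_one :: "'a::real_algebra_1 \<times> 'a" where
  "cx_one = (1, 0)"

definition cx_conj :: "'a::real_algebra_1 \<times> 'a \<Rightarrow> 'a \<times> 'a" where
  "cx_conj x = (fst x, - snd x)"

definition Vreal :: "('v \<Rightarrow> 'a::real_algebra_1) \<Rightarrow> ('a \<times> 'a) set" where
  "Vreal \<iota> = {(\<iota> u, 0) | u. True}"

definition VC :: "('v \<Rightarrow> 'a::real_algebra_1) \<Rightarrow> ('a \<times> 'a) set" where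
  "VC \<iota> = {(\<iota> u, \<iota> w) | u w. True}"

definition real_structure :: "('v \<Rightarrow> 'a::real_algebra_1) \<Rightarrow> ('a \<times> 'a \<Rightarrow> 'a \<times> 'a) \<Rightarrow> bool" where
  "real_structure \<iota> \<sigma> \<longleftrightarrow>
     (\<forall>x y. \<sigma> (cx_add x y) = cx_add (\<sigma> x) (\<sigma> y)) \<and>
     (\<forall>z x. \<sigma> (cx_scale z x) = cx_scale (cnj z) (\<sigma> x)) \<and>
     (\<forall>x y. \<sigma> (cx_mult x y) = cx_mult (\<sigma> x) (\<sigma> y)) \<and>
     \<sigma> cx_one = cx_one \<and>
     bij \<sigma> \<and>
     (\<forall>x. \<sigma> (\<sigma> x) = x) \<and>
     \<sigma> ` VC \<iota> \<subseteq> VC \<iota>"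

definition admissible :: "('a::real_algebra_1 \<times> 'a \<Rightarrow> 'a \<times> 'a) \<Rightarrow> bool" where
  "admissible \<sigma> \<longleftrightarrow> (\<forall>x. \<sigma> (cx_conj x) = cx_conj (\<sigma> x))"

definition Vsigma :: "('v \<Rightarrow> 'a::real_algebra_1) \<Rightarrow> ('a \<times> 'a \<Rightarrow> 'a \<times> 'a) \<Rightarrow> ('a \<times> 'a) set" where
  "Vsigma \<iota> \<sigma> = {x \<in> VC \<iota>. \<sigma> x = x}"

text \<open>V_+ = V \<inter> V_\<sigma> and V_- = V \<inter> i V_\<sigma>, pulled back to V along the (injective) embedding.\<close>
definition Vplus :: "('v \<Rightarrow> 'a::real_algebra_1) \<Rightarrow> ('a \<times> 'a \<Rightarrow> 'a \<times> 'a) \<Rightarrow> 'v set" where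
  "Vplus \<iota> \<sigma> = {u. (\<iota> u, 0) \<in> Vreal \<iota> \<inter> Vsigma \<iota> \<sigma>}"

definition Vminus :: "('v \<Rightarrow> 'a::real_algebra_1) \<Rightarrow> ('a \<times> 'a \<Rightarrow> 'a \<times> 'a) \<Rightarrow> 'v set" where
  "Vminus \<iota> \<sigma> = {u. (\<iota> u, 0) \<in> Vreal \<iota> \<inter> cx_scale \<i> ` Vsigma \<iota> \<sigma>}"

definition Q_orth_decomp :: "('v::real_vector \<Rightarrow> real) \<Rightarrow> 'v set \<Rightarrow> 'v set \<Rightarrow> bool" where
  "Q_orth_decomp Q A B \<longleftrightarrow>
     subspace A \<and> subspace B \<and>
     (\<forall>v. \<exists>a\<in>A. \<exists>b\<in>B. v = a + b) \<and> A \<inter> B = {0} \<and>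
     (\<forall>a\<in>A. \<forall>b\<in>B. Q (a + b) = Q a + Q b)"

end

theory Submission
  imports Defs
begin

lemma cx_add_pair[simp]: "cx_add (a,b) (c,d) = (a+c, b+d)"
  by (simp add: cx_add_def)
lemma cx_mult_pair[simp]: "cx_mult (a,b) (c,d) = (a*c - b*d, a*d + b*c)"
  by (simp add: cx_mult_def)
lemma cx_scale_pair[simp]:
  "cx_scale z (a,b) = (Re z *\<^sub>R a - Im z *\<^sub>R b, Re z *\<^sub>R b + Im z *\<^sub>R a)"
  by (simp add: cx_scale_def)
lemma cx_conj_pair[simp]: "cx_conj (a,b) = (a, -b)"
  by (simp add: cx_conj_def)

lemma vec_self_neg: "(u::'b::real_vector) = - u \<Longrightarrow> u = 0"
proof -
  assume "u = - u"
  then have "u + u = 0" by (metis eq_neg_iff_add_eq_0)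
  then have "(2::real) *\<^sub>R u = 0" by (simp add: scaleR_2)
  then show "u = 0" by simp
qed

lemma T_decomp:
  fixes T :: "'v::real_vector \<Rightarrow> 'v" and Q :: "'v \<Rightarrow> real"
  assumes lT: "linear T" and inv: "\<forall>v. T (T v) = v" and qT: "\<forall>v. Q (T v) = Q v"
    and qf: "quadratic_form Q"
  shows "Q_orth_decomp Q {u. T u = u} {u. T u = - u}"
  unfolding Q_orth_decomp_def
proof (intro conjI)
  show "subspace {u. T u = u}" unfolding subspace_def
    using lT by (simp add: linear_0 linear_add linear_scale)
  show "subspace {u. T u = - u}" unfolding subspace_def
    using lT by (simp add: linear_0 linear_add linear_scale)
  show "\<forall>v. \<exists>a\<in>{u. T u = u}. \<exists>b\<in>{u. T u = - u}. v = a + b"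
  proof
    fix v
    define a where "a = (1/2::real) *\<^sub>R (v + T v)"
    define b where "b = (1/2::real) *\<^sub>R (v - T v)"
    have "T a = a" unfolding a_def using lT inv by (simp add: linear_add linear_scale add.commute)
    moreover have "T b = - b" unfolding b_def using lT inv
      by (simp add: linear_diff linear_scale scaleR_diff_right)
    moreover have "v = a + b" unfolding a_def b_def
      by (simp add: scaleR_add_right scaleR_diff_right flip: scaleR_add_left)
    ultimately show "\<exists>a\<in>{u. T u = u}. \<exists>b\<in>{u. T u = - u}. v = a + b" by blast
  qed
  show "{u. T u = u} \<inter> {u. T u = - u} = {0}"
    using lT by (auto simp: linear_0 intro: vec_self_neg[OF sym])
  show "\<forall>a\<in>{u. T u = u}. \<forall>b\<in>{u. T u = - u}. Q (a + b) = Q a + Q b"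
  proof (intro ballI)
    fix a b assume "a \<in> {u. T u = u}" "b \<in> {u. T u = - u}"
    then have ta: "T a = a" and tb: "T b = - b" by auto
    obtain B where bl: "bilinear B" and sym: "\<forall>u w. B u w = B w u" and qb: "\<forall>v. Q v = B v v"
      using qf unfolding quadratic_form_def by blast
    have "Q (a + b) = Q (T (a + b))" using qT by simp
    also have "\<dots> = Q (a - b)" using lT ta tb by (simp add: linear_add)
    finally have e: "Q (a + b) = Q (a - b)" .
    have e1: "Q (a + b) = B a a + B a b + B b a + B b b"
      using qb bl by (simp add: bilinear_ladd bilinear_radd)
    have e2: "Q (a - b) = B a a - B a b - B b a + B b b"
      using qb bl by (simp add: bilinear_lsub bilinear_rsub)
    have "B b a = B a b" using sym by simp
    then show "Q (a + b) = Q a + Q b" using e e1 e2 qb by simp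
  qed
qed

lemma iota_inj:
  assumes lin: "linear \<iota>" and cl: "\<forall>v. \<iota> v * \<iota> v = (of_real (Q v) :: 'a::real_algebra_1)"
    and nd: "nondegenerate Q"
  shows "inj \<iota>"
proof -
  have k: "u = 0" if z: "\<iota> u = 0" for u
  proof -
    have "Q u = 0" using cl z by (metis mult_zero_left of_real_0 of_real_eq_iff)
    have "Q (u + w) = Q u + Q w" for w
    proof -
      have "(of_real (Q (u + w)) :: 'a) = \<iota> (u+w) * \<iota> (u+w)" using cl by simp
      also have "\<dots> = \<iota> w * \<iota> w" using lin z by (simp add: linear_add)
      also have "\<dots> = of_real (Q w)" using cl by simp
      finally show ?thesis using \<open>Q u = 0\<close> by simp
    qed
    then show "u = 0" using nd unfolding nondegenerate_def by blast
  qed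
  show ?thesis
  proof (rule injI)
    fix x y assume "\<iota> x = \<iota> y"
    then have "\<iota> (x - y) = 0" using lin by (simp add: linear_diff)
    then show "x = y" using k[of "x - y"] by simp
  qed
qed

locale RS =
  fixes \<iota> :: "'v::real_vector \<Rightarrow> 'a::real_algebra_1" and \<sigma> :: "'a \<times> 'a \<Rightarrow> 'a \<times> 'a"
  assumes rs: "real_structure \<iota> \<sigma>" and lin: "linear \<iota>"
begin

lemma s_add: "\<sigma> (cx_add x y) = cx_add (\<sigma> x) (\<sigma> y)"
  using rs unfolding real_structure_def by blast
lemma s_scale: "\<sigma> (cx_scale z x) = cx_scale (cnj z) (\<sigma> x)"
  using rs unfolding real_structure_def by blast
lemma s_mult: "\<sigma> (cx_mult x y) = cx_mult (\<sigma> x) (\<sigma> y)"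
  using rs unfolding real_structure_def by blast
lemma s_one: "\<sigma> (1,0) = (1,0)"
  using rs unfolding real_structure_def cx_one_def by blast
lemma s_inv: "\<sigma> (\<sigma> x) = x"
  using rs unfolding real_structure_def by blast
lemma s_VC: "x \<in> VC \<iota> \<Longrightarrow> \<sigma> x \<in> VC \<iota>"
  using rs unfolding real_structure_def by blast

lemma s_add2: "\<sigma> (a+c, b+d) = cx_add (\<sigma> (a,b)) (\<sigma> (c,d))"
  using s_add[of "(a,b)" "(c,d)"] by simp

lemma s_real: "\<sigma> (r *\<^sub>R a, r *\<^sub>R b) = (r *\<^sub>R fst (\<sigma> (a,b)), r *\<^sub>R snd (\<sigma> (a,b)))"
  using s_scale[of "complex_of_real r" "(a,b)"] by (simp add: prod_eq_iff cx_scale_def)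

lemma s_i: "\<sigma> (-b, a) = (snd (\<sigma> (a,b)), - fst (\<sigma> (a,b)))"
  using s_scale[of "\<i>" "(a,b)"] by (simp add: prod_eq_iff cx_scale_def)

lemma s_mi: "\<sigma> (b, -a) = (- snd (\<sigma> (a,b)), fst (\<sigma> (a,b)))"
  using s_scale[of "-\<i>" "(a,b)"] by (simp add: prod_eq_iff cx_scale_def)

lemma s_zero: "\<sigma> (0,0) = (0,0)"
  using s_real[of 0 0 0] by simp

lemma s_neg: "\<sigma> (-a, -b) = (- fst (\<sigma> (a,b)), - snd (\<sigma> (a,b)))"
  using s_real[of "-1" a b] by simp

lemma VC_mem: "(\<iota> u, \<iota> w) \<in> VC \<iota>" unfolding VC_def by blast

lemma s_VC_obt: obtains a b where "\<sigma> (\<iota> u, \<iota> w) = (\<iota> a, \<iota> b)"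
  using s_VC[OF VC_mem[of u w]] unfolding VC_def by blast

lemma s_decomp:
  "\<sigma> (a,b) = (fst (\<sigma> (a,0)) + snd (\<sigma> (b,0)), snd (\<sigma> (a,0)) - fst (\<sigma> (b,0)))"
proof -
  have "\<sigma> (a,b) = cx_add (\<sigma> (a,0)) (\<sigma> (-0,b))" using s_add2[of a 0 0 b] by simp
  also have "\<sigma> (-0,b) = (snd (\<sigma> (b,0)), - fst (\<sigma> (b,0)))" by (rule s_i)
  finally show ?thesis by (cases "\<sigma> (a,0)") simp
qed

lemma three_real:
  assumes H: "\<forall>u. \<exists>a. \<sigma> (\<iota> u, 0) = (\<iota> a, 0)"
    and sp: "span {prod_list (map \<iota> vs) | vs. True} = (UNIV :: 'a set)"
  shows "snd (\<sigma> (p,0)) = 0"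
proof -
  have sub: "subspace {p. snd (\<sigma> (p,0)) = 0}"
    unfolding subspace_def
  proof (intro conjI ballI allI)
    show "0 \<in> {p. snd (\<sigma> (p, 0)) = 0}" using s_zero by simp
  next
    fix x y assume "x \<in> {p. snd (\<sigma> (p, 0)) = 0}" "y \<in> {p. snd (\<sigma> (p, 0)) = 0}"
    then show "x + y \<in> {p. snd (\<sigma> (p, 0)) = 0}"
      using s_add2[of x y 0 0] by (simp add: cx_add_def)
  next
    fix c x assume "x \<in> {p. snd (\<sigma> (p, 0)) = 0}"
    then show "c *\<^sub>R x \<in> {p. snd (\<sigma> (p, 0)) = 0}"
      using s_real[of c x 0] by simp
  qed
  have prods: "snd (\<sigma> (prod_list (map \<iota> vs), 0)) = 0" for vs
  proof (induction vs)
    case Nil then show ?case using s_one by simp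
  next
    case (Cons v vs)
    obtain a where a: "\<sigma> (\<iota> v, 0) = (\<iota> a, 0)" using H by blast
    have "(prod_list (map \<iota> (v#vs)), 0::'a) = cx_mult (\<iota> v, 0) (prod_list (map \<iota> vs), 0)"
      by simp
    then have "\<sigma> (prod_list (map \<iota> (v#vs)), 0) = cx_mult (\<iota> a, 0) (\<sigma> (prod_list (map \<iota> vs), 0))"
      using s_mult[of "(\<iota> v, 0)" "(prod_list (map \<iota> vs), 0)"] a by simp
    then show ?case using Cons by (cases "\<sigma> (prod_list (map \<iota> vs), 0)") simp
  qed
  have "p \<in> span {prod_list (map \<iota> vs) | vs. True}" using sp by simp
  then show ?thesis
    by (rule span_induct[OF _ sub]) (use prods in auto)
qed

lemma three_adm:
  assumes "\<And>p. snd (\<sigma> (p,0)) = 0"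
  shows "admissible \<sigma>"
  unfolding admissible_def
proof
  fix x :: "'a \<times> 'a"
  obtain a b where x: "x = (a,b)" by (cases x)
  have "\<sigma> (cx_conj x) = \<sigma> (a, -b)" using x by simp
  also have "\<dots> = (fst (\<sigma> (a,0)) + snd (\<sigma> (-b,0)), snd (\<sigma> (a,0)) - fst (\<sigma> (-b,0)))"
    by (rule s_decomp)
  also have "\<sigma> (-b,0) = \<sigma> (-b,-0)" by simp
  finally show "\<sigma> (cx_conj x) = cx_conj (\<sigma> x)"
    using x s_decomp[of a b] s_neg[of b 0] assms by simp
qed

lemma adm_three:
  assumes "admissible \<sigma>"
  shows "\<sigma> (\<iota> u, 0) \<in> Vreal \<iota>"
proof -
  obtain a b where ab: "\<sigma> (\<iota> u, \<iota> 0) = (\<iota> a, \<iota> b)" by (rule s_VC_obt)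
  have z: "\<iota> 0 = 0" using lin linear_0 by blast
  have "\<sigma> (cx_conj (\<iota> u, 0)) = cx_conj (\<sigma> (\<iota> u, 0))"
    using assms unfolding admissible_def by blast
  then have "\<iota> b = - \<iota> b" using ab z by simp
  then have "2 *\<^sub>R \<iota> b = 0" by (simp add: scaleR_2 eq_neg_iff_add_eq_0)
  then have "\<iota> b = 0" by simp
  then show ?thesis using ab z unfolding Vreal_def by auto
qed

lemma i0: "\<iota> 0 = 0" using lin linear_0 by blast

lemma adm_two:
  assumes "admissible \<sigma>"
  shows "cx_conj ` Vsigma \<iota> \<sigma> \<subseteq> Vsigma \<iota> \<sigma>"
proof
  fix y assume "y \<in> cx_conj ` Vsigma \<iota> \<sigma>"
  then obtain x where x: "x \<in> Vsigma \<iota> \<sigma>" "y = cx_conj x" by blast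
  then obtain u w where uw: "x = (\<iota> u, \<iota> w)" "\<sigma> x = x"
    unfolding Vsigma_def VC_def by blast
  have "y = (\<iota> u, \<iota> (-w))" using x uw lin linear_neg by (simp add: linear_neg)
  then have "y \<in> VC \<iota>" using VC_mem by simp
  moreover have "\<sigma> y = y" using assms x uw unfolding admissible_def by simp
  ultimately show "y \<in> Vsigma \<iota> \<sigma>" unfolding Vsigma_def by blast
qed

lemma two_three:
  assumes H: "cx_conj ` Vsigma \<iota> \<sigma> \<subseteq> Vsigma \<iota> \<sigma>"
  shows "\<sigma> (\<iota> u, 0) \<in> Vreal \<iota>"
proof -
  obtain a b where ab: "\<sigma> (\<iota> u, \<iota> 0) = (\<iota> a, \<iota> b)" by (rule s_VC_obt)
  define p where "p = \<iota> u"
  define A where "A = \<iota> a"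
  define B where "B = \<iota> b"
  have s: "\<sigma> (p,0) = (A,B)" using ab i0 p_def A_def B_def by simp
  have sAB: "\<sigma> (A,B) = (p,0)" using s s_inv by metis
  have Yfix: "\<sigma> (p + A, B) = (p + A, B)"
    using s_add2[of p A 0 B] s sAB by simp
  have "(p + A, B) \<in> VC \<iota>" using VC_mem[of "u+a" b] lin p_def A_def B_def
    by (simp add: linear_add)
  then have "(p + A, B) \<in> Vsigma \<iota> \<sigma>" using Yfix unfolding Vsigma_def by blast
  then have "cx_conj (p + A, B) \<in> Vsigma \<iota> \<sigma>" using H by blast
  then have cY: "\<sigma> (p + A, -B) = (p + A, -B)" unfolding Vsigma_def by simp
  have "\<sigma> (p + (-A), 0 + (-B)) = cx_add (\<sigma> (p,0)) (\<sigma> (-A,-B))" by (rule s_add2)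
  then have sZ: "\<sigma> (p - A, -B) = (A - p, B)" using s_neg[of A B] s sAB by simp
  have Wfix: "\<sigma> (B, p - A) = (B, p - A)"
    using s_i[of "-B" "p - A"] sZ by simp
  have "(B, p - A) \<in> VC \<iota>" using VC_mem[of b "u-a"] lin p_def A_def B_def
    by (simp add: linear_diff)
  then have "(B, p - A) \<in> Vsigma \<iota> \<sigma>" using Wfix unfolding Vsigma_def by blast
  then have "cx_conj (B, p - A) \<in> Vsigma \<iota> \<sigma>" using H by blast
  then have cW: "\<sigma> (B, A - p) = (B, A - p)" unfolding Vsigma_def by simp
  have sW2: "\<sigma> (p - A, B) = (A - p, -B)"
    using s_i[of "A - p" B] cW by simp
  have "\<sigma> ((p + A) + (p - A), -B + B) = cx_add (\<sigma> (p + A, -B)) (\<sigma> (p - A, B))"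
    by (rule s_add2)
  then have e1: "\<sigma> ((p + A) + (p - A), -B + B) = (2 *\<^sub>R A, - B - B)"
    using cY sW2 by (simp add: scaleR_2)
  have e2: "\<sigma> (2 *\<^sub>R p, 2 *\<^sub>R 0) = (2 *\<^sub>R A, 2 *\<^sub>R B)" using s_real[of 2 p 0] s by simp
  have "(p + A) + (p - A) = 2 *\<^sub>R p" by (simp add: scaleR_2)
  then have "2 *\<^sub>R B = - B - B" using e1 e2 by simp
  then have eq: "2 *\<^sub>R B = - (2 *\<^sub>R B)" by (simp add: scaleR_2)
  have "(4::real) *\<^sub>R B = 2 *\<^sub>R B + 2 *\<^sub>R B" by (simp flip: scaleR_left_distrib)
  also have "\<dots> = 0" using eq eq_neg_iff_add_eq_0 by blast
  finally have "(4::real) *\<^sub>R B = 0" .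
  then have "B = 0" by simp
  then show ?thesis using s p_def A_def unfolding Vreal_def by auto
qed

lemma plus_iff: "u \<in> Vplus \<iota> \<sigma> \<longleftrightarrow> \<sigma> (\<iota> u, 0) = (\<iota> u, 0)"
  unfolding Vplus_def Vreal_def Vsigma_def using VC_mem[of u 0] i0 by auto

lemma minus_iff: "u \<in> Vminus \<iota> \<sigma> \<longleftrightarrow> \<sigma> (\<iota> u, 0) = (- \<iota> u, 0)"
proof
  assume "u \<in> Vminus \<iota> \<sigma>"
  then obtain y where y: "y \<in> Vsigma \<iota> \<sigma>" "(\<iota> u, 0) = cx_scale \<i> y"
    unfolding Vminus_def by blast
  obtain p q where pq: "y = (p,q)" by (cases y)
  have "q = - \<iota> u" "p = 0" using y(2) pq by (auto simp: cx_scale_def)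
  then have "\<sigma> (0, - \<iota> u) = (0, - \<iota> u)" using y pq unfolding Vsigma_def by simp
  then show "\<sigma> (\<iota> u, 0) = (- \<iota> u, 0)" using s_mi[of 0 "\<iota> u"]
    by (simp add: prod_eq_iff)
next
  assume h: "\<sigma> (\<iota> u, 0) = (- \<iota> u, 0)"
  have y: "\<sigma> (0, - \<iota> u) = (0, - \<iota> u)" using s_mi[of 0 "\<iota> u"] h by simp
  have "(0, - \<iota> u) = (\<iota> 0, \<iota> (-u))" using i0 lin by (simp add: linear_neg)
  then have "(0, - \<iota> u) \<in> VC \<iota>" using VC_mem by metis
  then have "(0, - \<iota> u) \<in> Vsigma \<iota> \<sigma>" using y unfolding Vsigma_def by blast
  moreover have "(\<iota> u, 0) = cx_scale \<i> (0, - \<iota> u)" by simp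
  ultimately show "u \<in> Vminus \<iota> \<sigma>" unfolding Vminus_def Vreal_def by blast
qed

lemma three_four:
  assumes inj: "inj \<iota>" and cl: "\<forall>v. \<iota> v * \<iota> v = of_real (Q v)"
    and H: "\<forall>u. \<exists>a. \<sigma> (\<iota> u, 0) = (\<iota> a, 0)"
  shows "\<exists>T. linear T \<and> (\<forall>v. T (T v) = v) \<and> (\<forall>v. Q (T v) = Q v) \<and>
            (\<forall>v. \<sigma> (\<iota> v, 0) = (\<iota> (T v), 0))"
proof -
  define T where "T v = (SOME a. \<sigma> (\<iota> v, 0) = (\<iota> a, 0))" for v
  have hT: "\<sigma> (\<iota> v, 0) = (\<iota> (T v), 0)" for v
    unfolding T_def using H by (metis (mono_tags, lifting) someI_ex)
  have uq: "T v = a" if "\<sigma> (\<iota> v, 0) = (\<iota> a, 0)" for v a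
    using that hT[of v] inj by (simp add: inj_eq)
  have "linear T"
  proof (rule linearI)
    fix x y
    have "\<sigma> (\<iota> x + \<iota> y, 0 + 0) = cx_add (\<sigma> (\<iota> x, 0)) (\<sigma> (\<iota> y, 0))" by (rule s_add2)
    then have "\<sigma> (\<iota> (x + y), 0) = (\<iota> (T x + T y), 0)"
      using hT lin by (simp add: linear_add)
    then show "T (x + y) = T x + T y" by (rule uq)
  next
    fix c x
    have "\<sigma> (\<iota> (c *\<^sub>R x), 0) = \<sigma> (c *\<^sub>R \<iota> x, c *\<^sub>R 0)" using lin by (simp add: linear_scale)
    also have "\<dots> = (c *\<^sub>R \<iota> (T x), c *\<^sub>R 0)" using s_real[of c "\<iota> x" 0] hT[of x] by simp
    also have "\<dots> = (\<iota> (c *\<^sub>R T x), 0)" using lin by (simp add: linear_scale)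
    finally show "T (c *\<^sub>R x) = c *\<^sub>R T x" by (rule uq)
  qed
  moreover have "T (T v) = v" for v
    using uq hT[of v] s_inv by metis
  moreover have "Q (T v) = Q v" for v
  proof -
    have "\<sigma> (cx_mult (\<iota> v, 0) (\<iota> v, 0)) = cx_mult (\<iota> (T v), 0) (\<iota> (T v), 0)"
      using s_mult hT by metis
    then have "\<sigma> (Q v *\<^sub>R 1, Q v *\<^sub>R 0) = (of_real (Q (T v)), 0)"
      using cl by (simp add: of_real_def)
    then have "of_real (Q (T v)) = (of_real (Q v) :: 'a)"
      using s_real[of "Q v" 1 0] s_one by (simp add: of_real_def)
    then show ?thesis by simp
  qed
  ultimately show ?thesis using hT by blast
qed

end

theorem lemma1:
  fixes Q :: "'v::euclidean_space \<Rightarrow> real"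
    and \<iota> :: "'v \<Rightarrow> 'a::real_algebra_1"
    and \<sigma> :: "'a \<times> 'a \<Rightarrow> 'a \<times> 'a"
  assumes "even DIM('v)"
    and "quadratic_form Q"
    and "nondegenerate Q"
    and "is_clifford_algebra Q \<iota>"
    and "real_structure \<iota> \<sigma>"
  shows "(admissible \<sigma> \<longleftrightarrow> cx_conj ` Vsigma \<iota> \<sigma> \<subseteq> Vsigma \<iota> \<sigma>) \<and>
         (admissible \<sigma> \<longleftrightarrow> \<sigma> ` Vreal \<iota> \<subseteq> Vreal \<iota>) \<and>
         (admissible \<sigma> \<longleftrightarrow>
            (\<exists>T. linear T \<and> (\<forall>v. T (T v) = v) \<and> (\<forall>v. Q (T v) = Q v) \<and>
                 (\<forall>v. \<sigma> (\<iota> v, 0) = (\<iota> (T v), 0)))) \<and>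
         (admissible \<sigma> \<longleftrightarrow> Q_orth_decomp Q (Vplus \<iota> \<sigma>) (Vminus \<iota> \<sigma>))"
proof -
  have lin: "linear \<iota>" and cl: "\<forall>v. \<iota> v * \<iota> v = of_real (Q v)"
    and sp: "span {prod_list (map \<iota> vs) | vs. True} = (UNIV :: 'a set)"
    using assms(4) unfolding is_clifford_algebra_def by auto
  interpret RS \<iota> \<sigma> by (rule RS.intro[OF assms(5) lin])
  have inj: "inj \<iota>" by (rule iota_inj[OF lin cl assms(3)])
  let ?P3 = "\<forall>u. \<exists>a. \<sigma> (\<iota> u, 0) = (\<iota> a, 0)"
  let ?P4 = "\<exists>T. linear T \<and> (\<forall>v. T (T v) = v) \<and> (\<forall>v. Q (T v) = Q v) \<and>
                 (\<forall>v. \<sigma> (\<iota> v, 0) = (\<iota> (T v), 0))"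
  have P3iff: "\<sigma> ` Vreal \<iota> \<subseteq> Vreal \<iota> \<longleftrightarrow> ?P3"
    unfolding Vreal_def by auto
  have memr: "x \<in> Vreal \<iota> \<Longrightarrow> \<exists>a. x = (\<iota> a, 0)" for x unfolding Vreal_def by blast
  have a13: "admissible \<sigma> \<Longrightarrow> ?P3" using adm_three memr by blast
  have a31: "?P3 \<Longrightarrow> admissible \<sigma>"
    using three_real[OF _ sp] three_adm by blast
  have a23: "cx_conj ` Vsigma \<iota> \<sigma> \<subseteq> Vsigma \<iota> \<sigma> \<Longrightarrow> ?P3" using two_three memr by blast
  have a34: "?P3 \<Longrightarrow> ?P4" using three_four[OF inj cl] by blast
  have a43: "?P4 \<Longrightarrow> ?P3" by blast
  have a45: "?P4 \<Longrightarrow> Q_orth_decomp Q (Vplus \<iota> \<sigma>) (Vminus \<iota> \<sigma>)"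
  proof -
    assume "?P4"
    then obtain T where lT: "linear T" and iT: "\<forall>v. T (T v) = v" and qT: "\<forall>v. Q (T v) = Q v"
      and hT: "\<forall>v. \<sigma> (\<iota> v, 0) = (\<iota> (T v), 0)" by blast
    have "Vplus \<iota> \<sigma> = {u. T u = u}" using plus_iff hT inj by (auto simp: inj_eq)
    moreover have "Vminus \<iota> \<sigma> = {u. T u = - u}"
    proof -
      have "\<iota> (T u) = - \<iota> u \<longleftrightarrow> T u = - u" for u
        using inj lin by (metis inj_eq linear_neg)
      then show ?thesis using minus_iff hT by auto
    qed
    ultimately show ?thesis using T_decomp[OF lT iT qT assms(2)] by simp
  qed
  have a53: "Q_orth_decomp Q (Vplus \<iota> \<sigma>) (Vminus \<iota> \<sigma>) \<Longrightarrow> ?P3"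
  proof
    fix v assume "Q_orth_decomp Q (Vplus \<iota> \<sigma>) (Vminus \<iota> \<sigma>)"
    then obtain a b where ab: "a \<in> Vplus \<iota> \<sigma>" "b \<in> Vminus \<iota> \<sigma>" "v = a + b"
      unfolding Q_orth_decomp_def by blast
    have "\<sigma> (\<iota> a + \<iota> b, 0 + 0) = cx_add (\<sigma> (\<iota> a, 0)) (\<sigma> (\<iota> b, 0))" by (rule s_add2)
    then have "\<sigma> (\<iota> v, 0) = (\<iota> (a - b), 0)"
      using ab plus_iff minus_iff lin by (simp add: linear_add linear_diff)
    then show "\<exists>c. \<sigma> (\<iota> v, 0) = (\<iota> c, 0)" by blast
  qed
  have i1: "admissible \<sigma> \<longleftrightarrow> cx_conj ` Vsigma \<iota> \<sigma> \<subseteq> Vsigma \<iota> \<sigma>"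
    using adm_two a23 a31 by (intro iffI) auto
  have i2: "admissible \<sigma> \<longleftrightarrow> \<sigma> ` Vreal \<iota> \<subseteq> Vreal \<iota>"
    using a13 a31 P3iff by (intro iffI) auto
  have i3: "admissible \<sigma> \<longleftrightarrow> ?P4"
  proof
    assume "admissible \<sigma>" then show ?P4 using a13 a34 by auto
  next
    assume "?P4" then show "admissible \<sigma>" using a43 a31 by auto
  qed
  have i4: "admissible \<sigma> \<longleftrightarrow> Q_orth_decomp Q (Vplus \<iota> \<sigma>) (Vminus \<iota> \<sigma>)"
  proof
    assume "admissible \<sigma>" then show "Q_orth_decomp Q (Vplus \<iota> \<sigma>) (Vminus \<iota> \<sigma>)"
      using a13 a34 a45 by auto
  next
    assume "Q_orth_decomp Q (Vplus \<iota> \<sigma>) (Vminus \<iota> \<sigma>)"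
    then show "admissible \<sigma>" using a53 a31 by auto
  qed
  show ?thesis using i1 i2 i3 i4 by blast
qed

end
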